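(* The LP randomized mechanism has approximation ratio at most $n$ for (integrally) scheduling any number of tasks to $n$ machines without money.
   Context: Scheduling without payments: $n$ machines, $m$ (indivisible) tasks; machine $i$ has private true times $t_{i,j}\ge0$ and declares $\hat t_{i,j}\ge0$. A randomized mechanism outputs a random integral allocation $A$ ($A_{i,j}\in\{0,1\}$, each task to exactly one machine) with marginals $a_{i,j}(\hat{\mathbf t})=\Pr[A_{i,j}=1]$. Machines are bound by their declarations: machine $i$ executes an assigned task $j$ for time $\max\{\hat t_{i,j},t_{i,j}\}$; her cost is $C_i(\hat{\mathbf t})=\sum_j a_{i,j}\max\{\hat t_{i,j},t_{i,j}\}$ and the makespan is $\mathbb E[\max_i\sum_jA_{i,j}\max\{\hat t_{i,j},t_{i,j}\}]$. A mechanism is truthful if for every $\mathbf t$, $i$, $\hat{\mathbf t}$: $C_i(\mathbf t_i,\hat{\mathbf t}_{-i})\le C_i(\hat{\mathbf t})$. Its approximation ratio is the supremum over instances $\mathbf t$ of the makespan under truthful reports divided by the optimal integral makespan $\min_A\max_i\sum_jA_{i,j}t_{i,j}$. The LP randomized mechanism, on declarations $\hat{\mathbf t}$, computes an optimal solution $\alpha(\hat{\mathbf t})$ (selected by a fixed rule among optimal solutions) of the linear program: minimize $\mu$ subject to $\sum_i\alpha_{i,j}=1$ for all $j$, $\mu-\sum_j\alpha_{i,j}\hat t_{i,j}\ge0$ for all $i$, $\alpha_{i,j}\ge0$; and assigns each task $j$ to machine $i$ with probability $\alpha_{i,j}(\hat{\mathbf t})$ (i.e.\ $a_{i,j}=\alpha_{i,j}$).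 *)

theory Defs
  imports "HOL-Probability.Probability" "HOL-Library.FuncSet"
begin

text \<open>Machines are indexed by i < n, tasks by j < m. A time matrix is a
function t :: nat => nat => real (entry t i j = time of machine i on task j).
An integral allocation is a map s from tasks {..<m} to machines {..<n}
(extensional outside {..<m}); A i j = 1 iff s j = i.\<close>

definition allocations :: "nat \<Rightarrow> nat \<Rightarrow> (nat \<Rightarrow> nat) set" where
  "allocations n m = ({..<m} \<rightarrow>\<^sub>E {..<n})"

text \<open>Makespan of allocation s when machines declared that and have true
times t: machine i executes task j for time max (that i j) (t i j).\<close>
definition exec_makespan ::
  "nat \<Rightarrow> nat \<Rightarrow> (nat \<Rightarrow> nat \<Rightarrow> real) \<Rightarrow> (nat \<Rightarrow> nat \<Rightarrow> real) \<Rightarrow> (nat \<Rightarrow> nat) \<Rightarrow> real" where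
  "exec_makespan n m that t s =
     Max ((\<lambda>i. \<Sum>j\<in>{j. j < m \<and> s j = i}. max (that i j) (t i j)) ` {..<n})"

definition makespan :: "nat \<Rightarrow> nat \<Rightarrow> (nat \<Rightarrow> nat \<Rightarrow> real) \<Rightarrow> (nat \<Rightarrow> nat) \<Rightarrow> real" where
  "makespan n m t s = Max ((\<lambda>i. \<Sum>j\<in>{j. j < m \<and> s j = i}. t i j) ` {..<n})"

definition opt_makespan :: "nat \<Rightarrow> nat \<Rightarrow> (nat \<Rightarrow> nat \<Rightarrow> real) \<Rightarrow> real" where
  "opt_makespan n m t = Min (makespan n m t ` allocations n m)"

definition lp_feasible ::
  "nat \<Rightarrow> nat \<Rightarrow> (nat \<Rightarrow> nat \<Rightarrow> real) \<Rightarrow> (nat \<Rightarrow> nat \<Rightarrow> real) \<Rightarrow> real \<Rightarrow> bool" where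
  "lp_feasible n m t alpha mu \<longleftrightarrow>
     (\<forall>j<m. (\<Sum>i<n. alpha i j) = 1) \<and>
     (\<forall>i<n. mu - (\<Sum>j<m. alpha i j * t i j) \<ge> 0) \<and>
     (\<forall>i<n. \<forall>j<m. alpha i j \<ge> 0)"

definition lp_optimal ::
  "nat \<Rightarrow> nat \<Rightarrow> (nat \<Rightarrow> nat \<Rightarrow> real) \<Rightarrow> (nat \<Rightarrow> nat \<Rightarrow> real) \<Rightarrow> real \<Rightarrow> bool" where
  "lp_optimal n m t alpha mu \<longleftrightarrow>
     lp_feasible n m t alpha mu \<and>
     (\<forall>alpha' mu'. lp_feasible n m t alpha' mu' \<longrightarrow> mu \<le> mu')"

definition lp_randomized_mechanism ::
  "nat \<Rightarrow> nat \<Rightarrow> ((nat \<Rightarrow> nat \<Rightarrow> real) \<Rightarrow> (nat \<Rightarrow> nat \<Rightarrow> real))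
   \<Rightarrow> ((nat \<Rightarrow> nat \<Rightarrow> real) \<Rightarrow> (nat \<Rightarrow> nat) pmf) \<Rightarrow> bool" where
  "lp_randomized_mechanism n m sel D \<longleftrightarrow>
     (\<forall>that. (\<forall>i<n. \<forall>j<m. that i j \<ge> 0) \<longrightarrow>
        (\<exists>mu. lp_optimal n m that (sel that) mu) \<and>
        set_pmf (D that) \<subseteq> allocations n m \<and>
        (\<forall>i<n. \<forall>j<m. measure_pmf.prob (D that) {s. s j = i} = sel that i j))"

end

theory Submission
  imports Defs
begin

lemma load_eq:
  fixes f :: "nat \<Rightarrow> real"
  shows   "(\<Sum>j\<in>{j. j < m \<and> s j = i}. f j) = (\<Sum>j<m. f j * indicator {s. s j = i} s)"
proof -
  have "(\<Sum>j<m. f j * indicator {s. s j = i} s) = (\<Sum>j<m. if s j = i then f j else 0)"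
    by (intro sum.cong) (auto simp: indicator_def)
  also have "\<dots> = (\<Sum>j\<in>{j\<in>{..<m}. s j = i}. f j)"
    by (rule sum.inter_filter[symmetric]) simp
  also have "{j\<in>{..<m}. s j = i} = {j. j < m \<and> s j = i}" by auto
  finally show ?thesis by simp
qed

theorem theorem6:
  fixes n m :: nat
    and sel :: "(nat \<Rightarrow> nat \<Rightarrow> real) \<Rightarrow> (nat \<Rightarrow> nat \<Rightarrow> real)"
    and D :: "(nat \<Rightarrow> nat \<Rightarrow> real) \<Rightarrow> (nat \<Rightarrow> nat) pmf"
    and t :: "nat \<Rightarrow> nat \<Rightarrow> real"
  assumes "n \<ge> 1"
    and "lp_randomized_mechanism n m sel D"
    and "\<forall>i<n. \<forall>j<m. t i j \<ge> 0"
  shows "measure_pmf.expectation (D t) (exec_makespan n m t t)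
           \<le> real n * opt_makespan n m t"
proof -
  have t0: "\<And>i j. i < n \<Longrightarrow> j < m \<Longrightarrow> t i j \<ge> 0" using assms(3) by auto
  note H0 = spec[OF assms(2)[unfolded lp_randomized_mechanism_def], of t]
  note H = mp[OF H0 assms(3)]
  obtain mu where opt: "lp_optimal n m t (sel t) mu" using H by blast
  have supp: "set_pmf (D t) \<subseteq> allocations n m" using H by blast
  have pr: "\<And>i j. i < n \<Longrightarrow> j < m \<Longrightarrow> measure_pmf.prob (D t) {s. s j = i} = sel t i j"
    using H by blast
  have finA: "finite (allocations n m)" unfolding allocations_def by (simp add: finite_PiE)
  have fin: "finite (set_pmf (D t))" using finite_subset[OF supp finA] .
  define g where "g s = (\<Sum>i<n. \<Sum>j<m. t i j * indicator {s. s j = i} s)" for s :: "nat \<Rightarrow> nat"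
  have mono: "exec_makespan n m t t s \<le> g s" if "s \<in> set_pmf (D t)" for s
  proof -
    have "exec_makespan n m t t s = Max ((\<lambda>i. \<Sum>j<m. t i j * indicator {s. s j = i} s) ` {..<n})"
      unfolding exec_makespan_def max.idem load_eq ..
    also have "\<dots> \<le> g s"
    proof (rule Max.boundedI)
      show "finite ((\<lambda>i. \<Sum>j<m. t i j * indicator {s. s j = i} s) ` {..<n})" by simp
      show "(\<lambda>i. \<Sum>j<m. t i j * indicator {s. s j = i} s) ` {..<n} \<noteq> {}" using assms(1) by (simp add: lessThan_empty_iff)
    next
      fix a assume "a \<in> (\<lambda>i. \<Sum>j<m. t i j * indicator {s. s j = i} s) ` {..<n}"
      then obtain i where i: "i < n" and a: "a = (\<Sum>j<m. t i j * indicator {s. s j = i} s)" by auto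
      show "a \<le> g s" unfolding g_def a
        by (rule member_le_sum[where f="\<lambda>i. \<Sum>j<m. t i j * indicator {s. s j = i} s"])
           (use i t0 in \<open>auto intro!: sum_nonneg simp: indicator_def\<close>)
    qed
    finally show ?thesis .
  qed
  have "measure_pmf.expectation (D t) (exec_makespan n m t t) \<le> measure_pmf.expectation (D t) g"
    by (rule integral_mono_AE) (auto simp: integrable_measure_pmf_finite[OF fin] AE_measure_pmf_iff mono)
  also have "\<dots> = (\<Sum>i<n. \<Sum>j<m. t i j * measure_pmf.prob (D t) {s. s j = i})"
  proof -
    have int: "\<And>f::(nat\<Rightarrow>nat)\<Rightarrow>real. integrable (measure_pmf (D t)) f"
      by (rule integrable_measure_pmf_finite[OF fin])
    have "measure_pmf.expectation (D t) g
        = (\<Sum>i<n. measure_pmf.expectation (D t) (\<lambda>s. \<Sum>j<m. t i j * indicator {s. s j = i} s))"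
      unfolding g_def by (rule Bochner_Integration.integral_sum[OF int])
    also have "\<dots> = (\<Sum>i<n. \<Sum>j<m. measure_pmf.expectation (D t) (\<lambda>s. t i j * indicator {s. s j = i} s))"
      by (intro sum.cong refl Bochner_Integration.integral_sum[OF int])
    also have "\<dots> = (\<Sum>i<n. \<Sum>j<m. t i j * measure_pmf.prob (D t) {s. s j = i})"
      by (intro sum.cong refl) (simp add: Bochner_Integration.integral_indicator)
    finally show ?thesis .
  qed
  also have "\<dots> = (\<Sum>i<n. \<Sum>j<m. sel t i j * t i j)"
    by (auto simp: pr intro!: sum.cong)
  also have "\<dots> \<le> (\<Sum>i<n. mu)"
  proof (rule sum_mono)
    fix i assume "i \<in> {..<n}"
    thus "(\<Sum>j<m. sel t i j * t i j) \<le> mu"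
      using opt unfolding lp_optimal_def lp_feasible_def by auto
  qed
  also have "\<dots> = real n * mu" by simp
  finally have main: "measure_pmf.expectation (D t) (exec_makespan n m t t) \<le> real n * mu" .
  have "mu \<le> opt_makespan n m t"
  proof -
    have ne: "allocations n m \<noteq> {}" unfolding allocations_def
      using assms(1) by (auto simp: PiE_eq_empty_iff lessThan_empty_iff)
    obtain s0 where s0: "s0 \<in> allocations n m" and eq: "opt_makespan n m t = makespan n m t s0"
    proof -
      have "Min (makespan n m t ` allocations n m) \<in> makespan n m t ` allocations n m"
        using finA ne by (intro Min_in) auto
      then obtain s0 where "s0 \<in> allocations n m" "Min (makespan n m t ` allocations n m) = makespan n m t s0"
        by auto
      thus ?thesis using that unfolding opt_makespan_def by blast
    qed
    define a where "a i j = (if s0 j = i then 1 else 0::real)" for i j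
    have s0r: "\<And>j. j < m \<Longrightarrow> s0 j < n" using s0 unfolding allocations_def by auto
    have "lp_feasible n m t a (makespan n m t s0)"
      unfolding lp_feasible_def
    proof (intro conjI allI impI)
      fix j assume j: "j < m"
      show "(\<Sum>i<n. a i j) = 1" unfolding a_def using s0r[OF j]
        by (simp add: sum.delta)
    next
      fix i assume i: "i < n"
      have "(\<Sum>j<m. a i j * t i j) = (\<Sum>j\<in>{j. j < m \<and> s0 j = i}. t i j)"
        unfolding a_def load_eq by (intro sum.cong) (auto simp: indicator_def)
      also have "\<dots> \<le> makespan n m t s0" unfolding makespan_def
        using i by (intro Max_ge) auto
      finally show "0 \<le> makespan n m t s0 - (\<Sum>j<m. a i j * t i j)" by simp
    next
      fix i j show "0 \<le> a i j" by (simp add: a_def)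
    qed
    thus ?thesis using opt eq unfolding lp_optimal_def by auto
  qed
  hence "real n * mu \<le> real n * opt_makespan n m t" by (simp add: mult_left_mono)
  with main show ?thesis by linarith
qed

end
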